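(* Every GSWNC ring is strongly $\pi$-regular, i.e., for every $a \in R$ there exists $n \in \mathbb{N}$ such that $a^n \in a^{n+1}R$.
   Context: All rings are associative with identity. An element $a$ of a ring is strongly weakly nil-clean if there exist an idempotent $e$ and a nilpotent $q$ with $eq = qe$ such that $a = q + e$ or $a = q - e$. A ring is GSWNC if every non-invertible element is strongly weakly nil-clean. *)

theory Defs
  imports Main
begin

definition invertible_elem :: "'a::ring_1 \<Rightarrow> bool" where
  "invertible_elem a \<longleftrightarrow> (\<exists>b. a * b = 1 \<and> b * a = 1)"

definition idempotent_elem :: "'a::ring_1 \<Rightarrow> bool" where
  "idempotent_elem e \<longleftrightarrow> e * e = e"

definition nilpotent_elem :: "'a::ring_1 \<Rightarrow> bool" where
  "nilpotent_elem q \<longleftrightarrow> (\<exists>n. q ^ n = 0)"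

definition strongly_weakly_nil_clean :: "'a::ring_1 \<Rightarrow> bool" where
  "strongly_weakly_nil_clean a \<longleftrightarrow>
     (\<exists>e q. idempotent_elem e \<and> nilpotent_elem q \<and> e * q = q * e \<and>
            (a = q + e \<or> a = q - e))"

definition GSWNC :: "'a::ring_1 itself \<Rightarrow> bool" where
  "GSWNC _ \<longleftrightarrow> (\<forall>a::'a. \<not> invertible_elem a \<longrightarrow> strongly_weakly_nil_clean a)"

definition strongly_pi_regular :: "'a::ring_1 itself \<Rightarrow> bool" where
  "strongly_pi_regular _ \<longleftrightarrow> (\<forall>a::'a. \<exists>n\<ge>1. \<exists>b. a ^ n = a ^ (n + 1) * b)"

end

theory Submission
  imports Defs
begin

lemma geo_aux:
  fixes x :: "'a::ring_1"
  shows "(1 - x) * (\<Sum>k<m. x^k) = 1 - x^m"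
proof (induction m)
  case 0 then show ?case by simp
next
  case (Suc m)
  have "(1 - x) * (\<Sum>k<Suc m. x^k) = (1 - x) * (\<Sum>k<m. x^k) + (1 - x) * x^m"
    by (simp add: distrib_left)
  also have "\<dots> = 1 - x^m + (x^m - x * x^m)" using Suc by (simp add: algebra_simps)
  finally show ?case by simp
qed

lemma comm_sum:
  fixes e q :: "'a::ring_1"
  assumes "e*q = q*e"
  shows "e * (\<Sum>k<m. (-q)^k) = (\<Sum>k<m. (-q)^k) * e"
proof -
  have p: "e * (-q)^k = (-q)^k * e" for k
  proof (induction k)
    case 0 then show ?case by simp
  next
    case (Suc k)
    have "e * (-q)^Suc k = (e * (-q)) * (-q)^k" by (simp add: mult.assoc)
    also have "\<dots> = (-q) * (e * (-q)^k)" using assms by (simp add: mult.assoc)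
    also have "\<dots> = (-q) * (-q)^k * e" using Suc by (simp add: mult.assoc)
    finally show ?case by simp
  qed
  show ?thesis by (simp add: sum_distrib_left sum_distrib_right p)
qed

lemma powq_comm:
  fixes e q :: "'a::ring_1"
  assumes "e*q = q*e"
  shows "e * q^k = q^k * e"
proof (induction k)
  case 0 then show ?case by simp
next
  case (Suc k)
  have "e * q^Suc k = (e * q) * q^k" by (simp add: mult.assoc)
  also have "\<dots> = q * (e * q^k)" using assms by (simp add: mult.assoc)
  also have "\<dots> = q * q^k * e" using Suc by (simp add: mult.assoc)
  finally show ?case by simp
qed

lemma main:
  fixes a e q :: "'a::ring_1"
  assumes ee: "e*e=e" and qn: "q^n=0" and eq: "e*q=q*e" and a: "a = q+e"
  shows "\<exists>b. a^n = a^(n+1)*b"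
proof -
  define S where "S = (\<Sum>k<n. (-q)^k)"
  have S1: "(1 + q) * S = 1"
    using geo_aux[of "-q" n] qn unfolding S_def
    by (simp add: power_minus')
  have eS: "e * S = S * e" unfolding S_def using comm_sum[OF eq] by simp
  have av: "a * (e * S) = e"
  proof -
    have "a * (e * S) = (q*e + e*e) * S" by (simp add: a algebra_simps)
    also have "\<dots> = ((1+q) * e) * S" using ee by (simp add: algebra_simps)
    also have "\<dots> = (e * (1+q)) * S" using eq by (simp add: algebra_simps)
    also have "\<dots> = e" using S1 by (simp add: mult.assoc)
    finally show ?thesis .
  qed
  have af: "a^k * (1-e) = q^k * (1-e)" for k
  proof (induction k)
    case 0 then show ?case by simp
  next
    case (Suc k)
    have "a^Suc k * (1-e) = a * (a^k * (1-e))" by (simp add: mult.assoc)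
    also have "\<dots> = (q+e) * (q^k * (1-e))" using Suc a by simp
    also have "\<dots> = q^Suc k * (1-e) + (e * q^k) * (1-e)" by (simp add: algebra_simps)
    also have "(e * q^k) * (1-e) = q^k * (e - e*e)"
      using powq_comm[OF eq, of k] by (simp add: algebra_simps)
    finally show ?case using ee by simp
  qed
  have ame: "a^n * e = a^n"
  proof -
    have "a^n * (1-e) = 0" using af[of n] qn by simp
    then show ?thesis by (simp add: algebra_simps)
  qed
  have "a^(n+1) * (e*S) = a^n * (a * (e*S))" by (metis power_Suc2 Suc_eq_plus1 mult.assoc)
  also have "\<dots> = a^n" using av ame by simp
  finally show ?thesis by metis
qed

theorem corollary2p12:
  assumes "GSWNC TYPE('a::ring_1)"
  shows "strongly_pi_regular TYPE('a)"
  unfolding strongly_pi_regular_def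
proof
  fix a :: 'a
  show "\<exists>n\<ge>1. \<exists>b. a ^ n = a ^ (n + 1) * b"
  proof (cases "invertible_elem a")
    case True
    then obtain b where "a * b = 1" unfolding invertible_elem_def by blast
    then have "a ^ 1 = a ^ (1+1) * b" by (simp add: mult.assoc power2_eq_square)
    then show ?thesis by blast
  next
    case False
    then obtain e q where ee: "e*e=e" and qn0: "\<exists>m. q^m=0" and eq: "e*q=q*e"
      and aa: "a = q + e \<or> a = q - e"
      using assms unfolding GSWNC_def strongly_weakly_nil_clean_def idempotent_elem_def
        nilpotent_elem_def by blast
    then obtain m where qm: "q^m = 0" by blast
    have qn: "q^Suc m = 0" using qm by (simp add: power_Suc2)
    have qn': "(-q)^Suc m = 0" using power_minus[of q "Suc m"] qn by (simp del: power_Suc)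
    have eq': "e*(-q) = (-q)*e" using eq by simp
    from aa show ?thesis
    proof
      assume "a = q + e"
      from main[OF ee qn eq this] show ?thesis by (intro exI[of _ "Suc m"]) auto
    next
      assume "a = q - e"
      then have "-a = (-q) + e" by simp
      from main[OF ee qn' eq' this] obtain b where
        b: "(-a)^Suc m = (-a)^(Suc m+1) * b" by blast
      have "(-1)^Suc m * a^Suc m = (-1)^Suc m * (a^(Suc m+1) * (-b))"
      proof -
        have "(-1)^Suc m * a^Suc m = (-a)^Suc m" by (rule power_minus[symmetric])
        also have "\<dots> = (-a)^(Suc m+1) * b" by (rule b)
        also have "\<dots> = ((-1)^Suc m * (-1)) * (a^(Suc m+1)) * b"
        proof -
          have x: "(-a)^(Suc m+1) = (-1)^(Suc m+1) * a^(Suc m+1)" by (rule power_minus)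
          have y: "(-1::'a)^(Suc m+1) = (-1)^Suc m * (-1)" by (metis power_Suc2 Suc_eq_plus1)
          show ?thesis by (simp only: x y)
        qed
        also have "\<dots> = (-1)^Suc m * (a^(Suc m+1) * (-b))" by (simp add: mult.assoc)
        finally show ?thesis .
      qed
      then have "a^Suc m = a^(Suc m+1) * (-b)"
        by (cases "even (Suc m)") (simp_all only: neg_one_even_power neg_one_odd_power, auto, metis minus_minus)
      then show ?thesis by (intro exI[of _ "Suc m"] conjI exI[of _ "-b"]) simp_all
    qed
  qed
qed

end
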